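(* In the setting below, fix $M\in\mathcal M$ and assume (i) $P_n(M)^{-1}=o(n)$; (ii) $\lim_{n\to\infty}\inf_{\theta\in\Theta^M}P_{n,\theta}(M)\,e^n=\infty$; (iii) for a sufficiently small ball $U$ centered at $\theta^M_0$, $\sup_{\theta\in U\cap\Theta^M}P_{n,\theta}(M)^{-1}=o(n)$. Then for every $\delta<1/2$, $$n^\delta\,\big\|\mathbb E_{\theta^M_0}(\bar T_n)-\mathbb E_{\theta^M_0}(\bar T_n\mid M)\big\|\to0 .$$
   Context: Setting: $(y_i)_{i\ge1}$ are i.i.d. from a distribution $f^*$. $\{p_\theta:\theta\in\Theta\}$, $\Theta\subseteq\mathbb R^p$, is a regular exponential family with natural parameter $\theta$, sufficient statistic $T$, and log-likelihood $\ell_\theta(y)=\log p_\theta(y)$; $\bar T_n=n^{-1}\sum_{i=1}^nT(y_i)$. $\mathcal M$ is a countable set of submodels $M=\{p_\theta:\theta\in\Theta^M\}$, $\Theta^M\subseteq\Theta$. For each $n$, $S_n:\mathbb R^p\to\mathcal M$ is a model selection procedure applied to $\bar T_n$; $P_n(M)=P(S_n(\bar T_n)=M)$ when $y_1,\dots,y_n$ are i.i.d. $f^*$, and $P_{n,\theta}(M)$ is the same probability when $y_1,\dots,y_n$ are i.i.d. $p_\theta$. The target is $\theta^M_0=\arg\sup_{\theta\in\Theta^M}\mathbb E_{f^*}[\ell_\theta(y)]$ (assumed to exist). $\mathbb E_{\theta}(\cdot)$ denotes expectation for $y_1,\dots,y_n$ i.i.d. $p_\theta$ and $\mathbb E_{\theta}(\cdot\mid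 M)$ the same conditional on $\{S_n(\bar T_n)=M\}$. *)

theory Defs
  imports "HOL-Probability.Probability" "HOL-Library.Landau_Symbols"
begin

definition nat_param_space :: "'y measure \<Rightarrow> ('y \<Rightarrow> 'p::euclidean_space) \<Rightarrow> 'p set" where
  "nat_param_space mu T = {\<theta>. integrable mu (\<lambda>y. exp (\<theta> \<bullet> T y))}"

definition log_partition :: "'y measure \<Rightarrow> ('y \<Rightarrow> 'p::euclidean_space) \<Rightarrow> 'p \<Rightarrow> real" where
  "log_partition mu T \<theta> = ln (\<integral>y. exp (\<theta> \<bullet> T y) \<partial>mu)"

definition ef_density :: "'y measure \<Rightarrow> ('y \<Rightarrow> 'p::euclidean_space) \<Rightarrow> 'p \<Rightarrow> 'y \<Rightarrow> real" where
  "ef_density mu T \<theta> y = exp (\<theta> \<bullet> T y - log_partition mu T \<theta>)"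

definition ef_loglik :: "'y measure \<Rightarrow> ('y \<Rightarrow> 'p::euclidean_space) \<Rightarrow> 'p \<Rightarrow> 'y \<Rightarrow> real" where
  "ef_loglik mu T \<theta> y = ln (ef_density mu T \<theta> y)"

definition ef_measure :: "'y measure \<Rightarrow> ('y \<Rightarrow> 'p::euclidean_space) \<Rightarrow> 'p \<Rightarrow> 'y measure" where
  "ef_measure mu T \<theta> = density mu (\<lambda>y. ennreal (ef_density mu T \<theta> y))"

definition regular_exp_family :: "'y measure \<Rightarrow> ('y \<Rightarrow> 'p::euclidean_space) \<Rightarrow> bool" where
  "regular_exp_family mu T \<longleftrightarrow>
     T \<in> borel_measurable mu \<and> emeasure mu (space mu) > 0 \<and>
     open (nat_param_space mu T) \<and> nat_param_space mu T \<noteq> {}"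

definition sample_mean :: "('y \<Rightarrow> 'p::euclidean_space) \<Rightarrow> nat \<Rightarrow> (nat \<Rightarrow> 'y) \<Rightarrow> 'p" where
  "sample_mean T n ys = (1 / real n) *\<^sub>R (\<Sum>i<n. T (ys i))"

definition iid_sample :: "nat \<Rightarrow> 'y measure \<Rightarrow> (nat \<Rightarrow> 'y) measure" where
  "iid_sample n P = PiM {..<n} (\<lambda>_. P)"

definition sel_event :: "('y \<Rightarrow> 'p::euclidean_space) \<Rightarrow> (nat \<Rightarrow> 'p \<Rightarrow> 'm) \<Rightarrow> nat \<Rightarrow> 'y measure \<Rightarrow> 'm \<Rightarrow> (nat \<Rightarrow> 'y) set" where
  "sel_event T S n P m = {ys \<in> space (iid_sample n P). S n (sample_mean T n ys) = m}"

definition sel_prob :: "('y \<Rightarrow> 'p::euclidean_space) \<Rightarrow> (nat \<Rightarrow> 'p \<Rightarrow> 'm) \<Rightarrow> nat \<Rightarrow> 'y measure \<Rightarrow> 'm \<Rightarrow> real" where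
  "sel_prob T S n P m = measure (iid_sample n P) (sel_event T S n P m)"

definition cond_exp_event :: "'a measure \<Rightarrow> 'a set \<Rightarrow> ('a \<Rightarrow> 'p::euclidean_space) \<Rightarrow> 'p" where
  "cond_exp_event P A X = (1 / measure P A) *\<^sub>R (\<integral>x. indicator A x *\<^sub>R X x \<partial>P)"

end

theory Submission
  imports Defs
begin

lemma fenchel_ineq:
  fixes a b :: real assumes "b > 0"
  shows "a * b \<le> exp a + b * ln b - b"
proof -
  have "1 + (a - ln b) \<le> exp (a - ln b)" by (rule exp_ge_add_one_self)
  also have "\<dots> = exp a / b" using assms by (simp add: exp_diff)
  finally have "b * (1 + (a - ln b)) \<le> exp a" using assms by (simp add: field_simps)
  thus ?thesis by (simp add: algebra_simps)
qed

lemma exp_quad_bound: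
  fixes x :: real shows "exp x \<le> 1 + x + exp \<bar>x\<bar> * x^2 / 2"
proof -
  obtain t where t: "\<bar>t\<bar> \<le> \<bar>x\<bar>" "exp x = (\<Sum>m<2. (x ^ m) / fact m) + (exp t / fact 2) * x ^ 2"
    using Maclaurin_exp_le[of x 2] by blast
  have "exp t \<le> exp \<bar>x\<bar>" using t(1) by simp
  hence "exp t * x^2 \<le> exp \<bar>x\<bar> * x^2" by (simp add: mult_right_mono)
  thus ?thesis using t(2) by (simp add: numeral_2_eq_2)
qed

lemma sq_exp_bound:
  fixes y c :: real assumes "c > 0"
  shows "y^2 \<le> 8 / c^2 * exp (c * \<bar>y\<bar> / 2)"
proof -
  have "1 + c*\<bar>y\<bar>/2 + (c*\<bar>y\<bar>/2)^2/2 \<le> exp (c*\<bar>y\<bar>/2)"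
    by (rule exp_lower_Taylor_quadratic) (use assms in simp)
  have "(c*\<bar>y\<bar>/2)^2/2 \<le> exp (c*\<bar>y\<bar>/2)" 
  proof -
    have "0 \<le> c*\<bar>y\<bar>/2" using assms by simp
    thus ?thesis using \<open>1 + c*\<bar>y\<bar>/2 + (c*\<bar>y\<bar>/2)^2/2 \<le> exp (c*\<bar>y\<bar>/2)\<close> by linarith
  qed
  moreover have "(c*\<bar>y\<bar>/2)^2 = c^2 * y^2 / 4" by (simp add: power_mult_distrib power_divide)
  ultimately have "c^2 * y^2 / 8 \<le> exp (c*\<bar>y\<bar>/2)" by simp
  thus ?thesis using assms by (simp add: field_simps)
qed

lemma pointwise_mgf:
  fixes s y c :: real assumes "c > 0" "\<bar>s\<bar> \<le> c/2"
  shows "exp (s*y) \<le> 1 + s*y + 4 * s^2 / c^2 * exp (c*\<bar>y\<bar>)"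
proof -
  have e1: "exp \<bar>s*y\<bar> \<le> exp (c*\<bar>y\<bar>/2)"
  proof -
    have "\<bar>s\<bar> * \<bar>y\<bar> \<le> c/2 * \<bar>y\<bar>" using assms by (intro mult_right_mono) auto
    thus ?thesis by (simp add: abs_mult)
  qed
  have "exp \<bar>s*y\<bar> * (s*y)^2/2 \<le> exp (c*\<bar>y\<bar>/2) * (s^2 * (8 / c^2 * exp (c * \<bar>y\<bar> / 2)))/2"
  proof -
    have "s^2 * y^2 \<le> s^2 * (8 / c^2 * exp (c * \<bar>y\<bar> / 2))"
      using sq_exp_bound[OF assms(1), of y] by (intro mult_left_mono) auto
    hence "(s*y)^2 \<le> s^2 * (8 / c^2 * exp (c * \<bar>y\<bar> / 2))" by (simp add: power_mult_distrib)
    thus ?thesis using e1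
      by (intro divide_right_mono mult_mono) auto
  qed
  also have "\<dots> = 4 * s^2 / c^2 * (exp (c*\<bar>y\<bar>/2) * exp (c*\<bar>y\<bar>/2))" by (simp add: field_simps)
  also have "exp (c*\<bar>y\<bar>/2) * exp (c*\<bar>y\<bar>/2) = exp (c*\<bar>y\<bar>)" by (simp add: exp_add[symmetric])
  finally show ?thesis using exp_quad_bound[of "s*y"] by linarith
qed

lemma int_Y_from_exp:
  fixes Y :: "'a \<Rightarrow> real"
  assumes Ym: "Y \<in> borel_measurable P" and c: "c > 0"
    and int: "integrable P (\<lambda>y. exp (c * \<bar>Y y\<bar>))"
  shows "integrable P Y"
proof (rule Bochner_Integration.integrable_bound[OF integrable_mult_right[OF int, of "1/c"]])
  show "Y \<in> borel_measurable P" by fact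
  show "AE x in P. norm (Y x) \<le> norm (1 / c * exp (c * \<bar>Y x\<bar>))"
  proof (intro AE_I2)
    fix x
    have "c * \<bar>Y x\<bar> \<le> exp (c * \<bar>Y x\<bar>)"
      using exp_ge_add_one_self[of "c * \<bar>Y x\<bar>"] by linarith
    hence "\<bar>Y x\<bar> \<le> 1/c * exp (c * \<bar>Y x\<bar>)" using c by (simp add: field_simps)
    thus "norm (Y x) \<le> norm (1 / c * exp (c * \<bar>Y x\<bar>))" using c by simp
  qed
qed

lemma mgf_bound:
  fixes Y :: "'a \<Rightarrow> real"
  assumes P: "prob_space P" and Ym: "Y \<in> borel_measurable P" and c: "c > 0"
    and int: "integrable P (\<lambda>y. exp (c * \<bar>Y y\<bar>))" and mean: "integral\<^sup>L P Y = 0"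
    and s: "\<bar>s\<bar> \<le> c/2"
  shows "integrable P (\<lambda>y. exp (s * Y y)) \<and>
    (\<integral>y. exp (s * Y y) \<partial>P) \<le> exp ((4 / c^2 * (\<integral>y. exp (c*\<bar>Y y\<bar>) \<partial>P)) * s^2)"
proof -
  interpret prob_space P by fact
  have iY: "integrable P Y" by (rule int_Y_from_exp[OF Ym c int])
  have ie: "integrable P (\<lambda>y. exp (s * Y y))"
  proof (rule Bochner_Integration.integrable_bound[OF int])
    show "(\<lambda>y. exp (s * Y y)) \<in> borel_measurable P" using Ym by measurable
    show "AE x in P. norm (exp (s * Y x)) \<le> norm (exp (c * \<bar>Y x\<bar>))"
    proof (intro AE_I2)
      fix x
      have "s * Y x \<le> \<bar>s\<bar> * \<bar>Y x\<bar>" by (metis abs_ge_self abs_mult)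
      also have "\<dots> \<le> c * \<bar>Y x\<bar>" using s c by (intro mult_right_mono) auto
      finally show "norm (exp (s * Y x)) \<le> norm (exp (c * \<bar>Y x\<bar>))" by simp
    qed
  qed
  define E where "E = (\<integral>y. exp (c*\<bar>Y y\<bar>) \<partial>P)"
  have "(\<integral>y. exp (s * Y y) \<partial>P) \<le> (\<integral>y. 1 + s * Y y + 4 * s^2 / c^2 * exp (c*\<bar>Y y\<bar>) \<partial>P)"
    using pointwise_mgf[OF c s] ie iY int
    by (intro integral_mono) (auto intro!: integrable_add integrable_mult_right)
  also have "\<dots> = 1 + s * 0 + 4 * s^2 / c^2 * E"
  proof -
    have "(\<integral>y. 1 + s * Y y + 4 * s^2 / c^2 * exp (c*\<bar>Y y\<bar>) \<partial>P)
       = (\<integral>y. 1 + s * Y y \<partial>P) + (\<integral>y. 4 * s^2 / c^2 * exp (c*\<bar>Y y\<bar>) \<partial>P)"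
      using iY int by (auto intro!: Bochner_Integration.integral_add integrable_add integrable_mult_right integrable_const)
    also have "(\<integral>y. 1 + s * Y y \<partial>P) = (\<integral>y. 1 \<partial>P) + (\<integral>y. s * Y y \<partial>P)"
      using iY by (auto intro!: Bochner_Integration.integral_add integrable_add integrable_mult_right integrable_const)
    finally show ?thesis using mean prob_space unfolding E_def by simp
  qed
  also have "\<dots> = 1 + (4 / c^2 * E) * s^2" by simp
  also have "\<dots> \<le> exp ((4 / c^2 * E) * s^2)" by (rule exp_ge_add_one_self)
  finally show ?thesis using ie unfolding E_def by simp
qed

lemma product_mgf:
  fixes Y :: "'a \<Rightarrow> real"
  assumes P: "prob_space P" and Ym: "Y \<in> borel_measurable P"
    and mgf: "\<And>s. \<bar>s\<bar> \<le> d \<Longrightarrow> integrable P (\<lambda>y. exp (s * Y y)) \<and> (\<integral>y. exp (s*Y y) \<partial>P) \<le> exp (K * s^2)"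
    and n: "n > 0" and l: "\<bar>l / real n\<bar> \<le> d"
  shows "integrable (PiM {..<n} (\<lambda>_. P)) (\<lambda>\<omega>. exp (l * ((1/real n) * (\<Sum>i<n. Y (\<omega> i)))))
     \<and> (\<integral>\<omega>. exp (l * ((1/real n) * (\<Sum>i<n. Y (\<omega> i)))) \<partial>PiM {..<n} (\<lambda>_. P)) \<le> exp (K * l^2 / real n)"
proof -
  interpret product_sigma_finite "\<lambda>_::nat. P"
    using P by (simp add: product_sigma_finite_def prob_space_imp_sigma_finite)
  have eq: "exp (l * ((1/real n) * (\<Sum>i<n. Y (\<omega> i)))) = (\<Prod>i<n. exp (l / real n * Y (\<omega> i)))" for \<omega>
    by (simp add: exp_sum[symmetric] sum_distrib_left)
  have m: "integrable P (\<lambda>y. exp (l / real n * Y y))" "(\<integral>y. exp (l / real n * Y y) \<partial>P) \<le> exp (K * (l / real n)^2)"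
    using mgf[OF l] by auto
  have i: "integrable (PiM {..<n} (\<lambda>_. P)) (\<lambda>\<omega>. \<Prod>i<n. exp (l / real n * Y (\<omega> i)))"
    using product_integrable_prod[of "{..<n}" "\<lambda>_ y. exp (l / real n * Y y)"] m by simp
  have "(\<integral>\<omega>. (\<Prod>i<n. exp (l / real n * Y (\<omega> i))) \<partial>PiM {..<n} (\<lambda>_. P))
      = (\<Prod>i<n. (\<integral>y. exp (l / real n * Y y) \<partial>P))"
    using product_integral_prod[of "{..<n}" "\<lambda>_ y. exp (l / real n * Y y)"] m by simp
  also have "\<dots> \<le> (\<Prod>i<n. exp (K * (l / real n)^2))"
    using m by (intro prod_mono) auto
  also have "\<dots> = exp (K * (l / real n)^2) ^ n" by simp
  also have "\<dots> = exp (real n * (K * (l / real n)^2))" by (simp add: exp_of_nat_mult)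
  also have "real n * (K * (l / real n)^2) = K * l^2 / real n" using n by (simp add: power2_eq_square field_simps)
  finally have le: "(\<integral>\<omega>. (\<Prod>i<n. exp (l / real n * Y (\<omega> i))) \<partial>PiM {..<n} (\<lambda>_. P)) \<le> exp (K * l^2 / real n)" .
  show ?thesis unfolding eq using i le by blast
qed

lemma fenchel_integral:
  fixes X :: "'a \<Rightarrow> real"
  assumes Q: "prob_space Q" and A: "A \<in> sets Q" and p: "measure Q A > 0"
    and iX: "integrable Q X" and iE: "integrable Q (\<lambda>x. exp (l * X x))" and l: "l > 0"
  shows "(\<integral>x. indicator A x * X x \<partial>Q) / measure Q A
      \<le> ((\<integral>x. exp (l * X x) \<partial>Q) + ln (1 / measure Q A) - 1) / l"
proof -
  define p where "p = measure Q A"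
  have p0: "p > 0" using p unfolding p_def .
  have pt: "l / p * (indicator A x * X x) \<le> exp (l * X x) + (ln (1/p) - 1) / p * indicator A x" for x
  proof (cases "x \<in> A")
    case True
    have "l * X x * (1/p) \<le> exp (l * X x) + (1/p) * ln (1/p) - 1/p"
      using fenchel_ineq[of "1/p" "l * X x"] p0 by simp
    moreover have "(ln (1/p) - 1) / p = (1/p) * ln (1/p) - 1/p" by (simp add: diff_divide_distrib)
    ultimately show ?thesis using True by simp
  next
    case False thus ?thesis by simp
  qed
  have iAX: "integrable Q (\<lambda>x. indicator A x * X x)"
    using integrable_mult_indicator[OF A iX] by simp
  have iA: "integrable Q (\<lambda>x. indicator A x :: real)"
    using A by (intro integrable_real_indicator) (simp_all add: finite_measure.emeasure_finite[OF prob_space.finite_measure[OF Q]] less_top[symmetric])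
  have "(\<integral>x. l / p * (indicator A x * X x) \<partial>Q) \<le> (\<integral>x. exp (l * X x) + (ln (1/p) - 1) / p * indicator A x \<partial>Q)"
    using pt by (intro integral_mono integrable_mult_right iAX Bochner_Integration.integrable_add iE iA)
  also have "\<dots> = (\<integral>x. exp (l * X x) \<partial>Q) + (ln (1/p) - 1) / p * p"
    using iE iA A by (simp add: p_def)
  also have "\<dots> = (\<integral>x. exp (l * X x) \<partial>Q) + ln (1/p) - 1" using p0 by simp
  finally have "l / p * (\<integral>x. indicator A x * X x \<partial>Q) \<le> (\<integral>x. exp (l * X x) \<partial>Q) + ln (1/p) - 1"
    by simp
  hence "l * ((\<integral>x. indicator A x * X x \<partial>Q) / p) \<le> (\<integral>x. exp (l * X x) \<partial>Q) + ln (1/p) - 1"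
    by (simp add: field_simps)
  thus ?thesis using l unfolding p_def[symmetric] by (simp add: field_simps)
qed

lemma partition_pos:
  assumes reg: "regular_exp_family mu T" and th: "\<theta> \<in> nat_param_space mu T"
  shows "(\<integral>y. exp (\<theta> \<bullet> T y) \<partial>mu) > 0"
proof -
  have Tm[measurable]: "T \<in> borel_measurable mu" and pos: "emeasure mu (space mu) > 0"
    using reg unfolding regular_exp_family_def by auto
  have int: "integrable mu (\<lambda>y. exp (\<theta> \<bullet> T y))" using th unfolding nat_param_space_def by simp
  have ge: "(\<integral>y. exp (\<theta> \<bullet> T y) \<partial>mu) \<ge> 0" by (rule Bochner_Integration.integral_nonneg) auto
  have "(\<integral>y. exp (\<theta> \<bullet> T y) \<partial>mu) \<noteq> 0"
  proof
    assume "(\<integral>y. exp (\<theta> \<bullet> T y) \<partial>mu) = 0"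
    hence "AE y in mu. exp (\<theta> \<bullet> T y) = 0" using integral_nonneg_eq_0_iff_AE[OF int] by auto
    hence "AE y in mu. False" by simp
    hence "ae_filter mu = bot" using trivial_limit_def by blast
    hence "emeasure mu (space mu) = 0" by (simp add: ae_filter_eq_bot_iff)
    thus False using pos by simp
  qed
  thus ?thesis using ge by linarith
qed

lemma ef_density_eq:
  assumes reg: "regular_exp_family mu T" and th: "\<theta> \<in> nat_param_space mu T"
  shows "ef_density mu T \<theta> y = exp (\<theta> \<bullet> T y) / (\<integral>y. exp (\<theta> \<bullet> T y) \<partial>mu)"
  using partition_pos[OF reg th]
  by (simp add: ef_density_def log_partition_def exp_diff)

lemma ef_density_meas[measurable]:
  assumes reg: "regular_exp_family mu T"
  shows "ef_density mu T \<theta> \<in> borel_measurable mu"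
proof -
  have Tm[measurable]: "T \<in> borel_measurable mu"
    using reg unfolding regular_exp_family_def by auto
  show ?thesis unfolding ef_density_def by measurable
qed

lemma ef_prob:
  assumes reg: "regular_exp_family mu T" and th: "\<theta> \<in> nat_param_space mu T"
  shows "prob_space (ef_measure mu T \<theta>)"
proof
  have Tm[measurable]: "T \<in> borel_measurable mu"
    using reg unfolding regular_exp_family_def by auto
  define Z where "Z = (\<integral>y. exp (\<theta> \<bullet> T y) \<partial>mu)"
  have Z: "Z > 0" using partition_pos[OF reg th] unfolding Z_def .
  have int: "integrable mu (\<lambda>y. exp (\<theta> \<bullet> T y))" using th unfolding nat_param_space_def by simp
  have "emeasure (ef_measure mu T \<theta>) (space (ef_measure mu T \<theta>))
      = (\<integral>\<^sup>+ y. ennreal (ef_density mu T \<theta> y) \<partial>mu)"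
    unfolding ef_measure_def using ef_density_meas[OF reg]
    by (simp add: emeasure_density)
  also have "\<dots> = (\<integral>\<^sup>+ y. ennreal (exp (\<theta> \<bullet> T y) / Z) \<partial>mu)"
    by (simp add: ef_density_eq[OF reg th] Z_def)
  also have "\<dots> = ennreal (\<integral>y. exp (\<theta> \<bullet> T y) / Z \<partial>mu)"
    using int Z by (intro nn_integral_eq_integral) auto
  also have "(\<integral>y. exp (\<theta> \<bullet> T y) / Z \<partial>mu) = 1" using Z unfolding Z_def by simp
  finally show "emeasure (ef_measure mu T \<theta>) (space (ef_measure mu T \<theta>)) = 1" by simp
qed

lemma ef_exp_integrable:
  assumes reg: "regular_exp_family mu T" and th: "\<theta> \<in> nat_param_space mu T"
    and th2: "\<theta> + v \<in> nat_param_space mu T"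
  shows "integrable (ef_measure mu T \<theta>) (\<lambda>y. exp (v \<bullet> T y))"
proof -
  have Tm[measurable]: "T \<in> borel_measurable mu"
    using reg unfolding regular_exp_family_def by auto
  define Z where "Z = (\<integral>y. exp (\<theta> \<bullet> T y) \<partial>mu)"
  have int: "integrable mu (\<lambda>y. exp ((\<theta> + v) \<bullet> T y))" using th2 unfolding nat_param_space_def by simp
  have eq: "ef_density mu T \<theta> y *\<^sub>R exp (v \<bullet> T y) = (1/Z) * exp ((\<theta> + v) \<bullet> T y)" for y
    by (simp add: ef_density_eq[OF reg th] Z_def inner_add_left exp_add)
  have nn: "AE x in mu. 0 \<le> ef_density mu T \<theta> x" by (simp add: ef_density_def)
  show ?thesis unfolding ef_measure_def
    using int ef_density_meas[OF reg] nn
    by (subst integrable_density) (auto simp: eq[simplified scaleR_conv_of_real, simplified] ef_density_def[symmetric])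
qed

lemma PiM_comp:
  fixes f :: "'a \<Rightarrow> 'b::{banach, second_countable_topology}"
  assumes P: "prob_space P" and i: "i < n" and f: "integrable P f"
  shows "integrable (PiM {..<n} (\<lambda>_. P)) (\<lambda>\<omega>. f (\<omega> i))"
    and "(\<integral>\<omega>. f (\<omega> i) \<partial>PiM {..<n} (\<lambda>_. P)) = integral\<^sup>L P f"
proof -
  have d: "distr (PiM {..<n} (\<lambda>_. P)) P (\<lambda>\<omega>. \<omega> i) = P"
    using distr_PiM_component[of "{..<n}" "\<lambda>_. P" i] P i by simp
  have m: "(\<lambda>\<omega>. \<omega> i) \<in> measurable (PiM {..<n} (\<lambda>_. P)) P"
    using measurable_component_singleton[of i "{..<n}" "\<lambda>_. P"] i by simp
  have fm: "f \<in> borel_measurable P" using f by (rule borel_measurable_integrable)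
  show "integrable (PiM {..<n} (\<lambda>_. P)) (\<lambda>\<omega>. f (\<omega> i))"
    using integrable_distr_eq[OF m fm] f d by simp
  show "(\<integral>\<omega>. f (\<omega> i) \<partial>PiM {..<n} (\<lambda>_. P)) = integral\<^sup>L P f"
    using integral_distr[OF m fm] d by simp
qed

lemma direction_bound:
  fixes mu :: "'y measure" and T :: "'y \<Rightarrow> 'p::euclidean_space" and A :: "nat \<Rightarrow> (nat \<Rightarrow> 'y) set"
  assumes reg: "regular_exp_family mu T" and th: "\<theta>0 \<in> nat_param_space mu T"
   and Ev: "eventually (\<lambda>n. measure (iid_sample n (ef_measure mu T \<theta>0)) (A n) > 0 \<and>
              1 / measure (iid_sample n (ef_measure mu T \<theta>0)) (A n) \<le> real n) sequentially"
   and int: "integrable (ef_measure mu T \<theta>0) T"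
   and c: "c > 0" and intc: "integrable (ef_measure mu T \<theta>0) (\<lambda>y. exp (c * \<bar>T y \<bullet> u\<bar>))"
  shows "\<exists>C. eventually (\<lambda>n. - (((\<integral>ys. sample_mean T n ys \<partial>iid_sample n (ef_measure mu T \<theta>0))
      - cond_exp_event (iid_sample n (ef_measure mu T \<theta>0)) (A n) (sample_mean T n)) \<bullet> u)
      \<le> C * ((1 + ln (real n)) / sqrt (real n))) sequentially"
proof -
  define P0 where "P0 = ef_measure mu T \<theta>0"
  have P0: "prob_space P0" unfolding P0_def by (rule ef_prob[OF reg th])
  interpret P0: prob_space P0 by (rule P0)
  have Tm0: "T \<in> borel_measurable mu" using reg unfolding regular_exp_family_def by auto
  have sP0: "sets P0 = sets mu" unfolding P0_def ef_measure_def by simp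
  have Tm[measurable]: "T \<in> borel_measurable P0"
    using Tm0 by (subst measurable_cong_sets[OF sP0 refl])
  have int0: "integrable P0 T" using int unfolding P0_def .
  have intc0: "integrable P0 (\<lambda>y. exp (c * \<bar>T y \<bullet> u\<bar>))" using intc unfolding P0_def .
  define \<mu> where "\<mu> = integral\<^sup>L P0 T"
  define Y where "Y y = T y \<bullet> u - \<mu> \<bullet> u" for y
  have Ym[measurable]: "Y \<in> borel_measurable P0" unfolding Y_def by measurable
  have iTu: "integrable P0 (\<lambda>y. T y \<bullet> u)" using int0 by (rule integrable_inner_left)
  have ETu: "(\<integral>y. T y \<bullet> u \<partial>P0) = \<mu> \<bullet> u" unfolding \<mu>_def using int0 by simp
  have iY: "integrable P0 Y" unfolding Y_def using iTu by auto
  have EY: "integral\<^sup>L P0 Y = 0" unfolding Y_def using iTu ETu P0.prob_space by simp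
  have intcY: "integrable P0 (\<lambda>y. exp (c * \<bar>Y y\<bar>))"
  proof (rule Bochner_Integration.integrable_bound[OF integrable_mult_right[OF intc0, of "exp (c * \<bar>\<mu> \<bullet> u\<bar>)"]])
    show "(\<lambda>y. exp (c * \<bar>Y y\<bar>)) \<in> borel_measurable P0" by measurable
    show "AE x in P0. norm (exp (c * \<bar>Y x\<bar>)) \<le> norm (exp (c * \<bar>\<mu> \<bullet> u\<bar>) * exp (c * \<bar>T x \<bullet> u\<bar>))"
    proof (intro AE_I2)
      fix x
      have "\<bar>Y x\<bar> \<le> \<bar>\<mu> \<bullet> u\<bar> + \<bar>T x \<bullet> u\<bar>" unfolding Y_def by linarith
      hence "c * \<bar>Y x\<bar> \<le> c * \<bar>\<mu> \<bullet> u\<bar> + c * \<bar>T x \<bullet> u\<bar>" using c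
        by (metis distrib_left mult_left_mono less_imp_le)
      hence "exp (c * \<bar>Y x\<bar>) \<le> exp (c * \<bar>\<mu> \<bullet> u\<bar> + c * \<bar>T x \<bullet> u\<bar>)" by simp
      thus "norm (exp (c * \<bar>Y x\<bar>)) \<le> norm (exp (c * \<bar>\<mu> \<bullet> u\<bar>) * exp (c * \<bar>T x \<bullet> u\<bar>))"
        by (simp add: exp_add)
    qed
  qed
  define K where "K = 4 / c^2 * (\<integral>y. exp (c*\<bar>Y y\<bar>) \<partial>P0)"
  have K0: "K \<ge> 0" unfolding K_def by (intro mult_nonneg_nonneg Bochner_Integration.integral_nonneg) auto
  have mgf: "\<And>s. \<bar>s\<bar> \<le> c/2 \<Longrightarrow> integrable P0 (\<lambda>y. exp (s * Y y)) \<and> (\<integral>y. exp (s*Y y) \<partial>P0) \<le> exp (K * s^2)"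
    using mgf_bound[OF P0 Ym c intcY EY] unfolding K_def by blast
  define L where "L = sqrt K + 1"
  have L1: "L \<ge> 1" unfolding L_def using K0 by simp
  have KL: "K \<le> L^2"
  proof -
    have "K = (sqrt K)^2" using K0 by simp
    also have "\<dots> \<le> L^2" unfolding L_def using K0 by (intro power_mono) auto
    finally show ?thesis .
  qed
  have evN: "eventually (\<lambda>n. real n \<ge> 4 / c^2 \<and> n > 0) sequentially"
    using eventually_ge_at_top[of "nat \<lceil>4 / c^2\<rceil> + 1"]
    by (rule eventually_mono) linarith
  show ?thesis
  proof (rule exI[of _ "2 * L"], rule eventually_mono[OF eventually_conj[OF Ev evN]], clarify)
    fix n :: nat
    define Q where "Q = iid_sample n P0"
    have Qd: "Q = PiM {..<n} (\<lambda>_. P0)" unfolding Q_def iid_sample_def ..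
    assume p0: "measure (iid_sample n (ef_measure mu T \<theta>0)) (A n) > 0"
      and pn: "1 / measure (iid_sample n (ef_measure mu T \<theta>0)) (A n) \<le> real n"
      and nc: "real n \<ge> 4 / c^2" and n0: "n > 0"
    define p where "p = measure Q (A n)"
    have p: "p > 0" "1 / p \<le> real n" using p0 pn unfolding p_def Q_def P0_def by auto
    have Q: "prob_space Q" unfolding Qd by (intro prob_space_PiM P0)
    interpret Q: prob_space Q by (rule Q)
    have An: "A n \<in> sets Q" using p measure_notin_sets unfolding p_def by fastforce
    define X where "X \<omega> = (1/real n) * (\<Sum>i<n. Y (\<omega> i))" for \<omega>
    have iYc: "integrable Q (\<lambda>\<omega>. Y (\<omega> i))" "(\<integral>\<omega>. Y (\<omega> i) \<partial>Q) = 0" if "i < n" for i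
      using PiM_comp[OF P0 that iY] EY unfolding Qd by auto
    have iX: "integrable Q X" unfolding X_def using iYc(1) by (intro integrable_mult_right Bochner_Integration.integrable_sum) auto
    have "(\<integral>\<omega>. (\<Sum>i<n. Y (\<omega> i)) \<partial>Q) = (\<Sum>i<n. \<integral>\<omega>. Y (\<omega> i) \<partial>Q)"
      using iYc(1) by (intro Bochner_Integration.integral_sum) auto
    also have "\<dots> = 0" using iYc(2) by simp
    finally have EX: "integral\<^sup>L Q X = 0" unfolding X_def by simp
    have iTc: "integrable Q (\<lambda>\<omega>. T (\<omega> i))" if "i < n" for i
      using PiM_comp[OF P0 that int0] unfolding Qd by auto
    have ism: "integrable Q (sample_mean T n)" unfolding sample_mean_def[abs_def] using iTc by (intro integrable_scaleR_right Bochner_Integration.integrable_sum) auto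
    have smu: "sample_mean T n \<omega> \<bullet> u = X \<omega> + \<mu> \<bullet> u" for \<omega>
    proof -
      have "sample_mean T n \<omega> \<bullet> u = (1/real n) * (\<Sum>i<n. T (\<omega> i) \<bullet> u)"
        unfolding sample_mean_def by (simp add: inner_sum_left)
      also have "(\<Sum>i<n. T (\<omega> i) \<bullet> u) = (\<Sum>i<n. Y (\<omega> i)) + real n * (\<mu> \<bullet> u)"
        unfolding Y_def by (simp add: sum_subtractf)
      finally show ?thesis unfolding X_def using n0 by (simp add: field_simps)
    qed
    have E1: "(\<integral>ys. sample_mean T n ys \<partial>Q) \<bullet> u = \<mu> \<bullet> u"
    proof -
      have "(\<integral>ys. sample_mean T n ys \<partial>Q) \<bullet> u = (\<integral>ys. sample_mean T n ys \<bullet> u \<partial>Q)"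
        using ism by simp
      also have "\<dots> = (\<integral>ys. X ys + \<mu> \<bullet> u \<partial>Q)" by (simp add: smu)
      also have "\<dots> = \<mu> \<bullet> u" using iX EX Q.prob_space by simp
      finally show ?thesis .
    qed
    have E2: "cond_exp_event Q (A n) (sample_mean T n) \<bullet> u = (1/p) * ((\<integral>x. indicator (A n) x * X x \<partial>Q) + p * (\<mu> \<bullet> u))"
    proof -
      have iI: "integrable Q (\<lambda>x. indicator (A n) x *\<^sub>R sample_mean T n x)"
        using integrable_mult_indicator[OF An ism] .
      have iAX: "integrable Q (\<lambda>x. indicator (A n) x * X x)"
        using integrable_mult_indicator[OF An iX] by simp
      have iA: "integrable Q (\<lambda>x. indicator (A n) x :: real)"
        using An by (intro integrable_real_indicator) (simp_all add: Q.emeasure_finite less_top[symmetric])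
      have "(\<integral>x. indicator (A n) x *\<^sub>R sample_mean T n x \<partial>Q) \<bullet> u
          = (\<integral>x. (indicator (A n) x *\<^sub>R sample_mean T n x) \<bullet> u \<partial>Q)"
        by (rule integral_inner_left[symmetric]) (use iI in auto)
      also have "\<dots> = (\<integral>x. indicator (A n) x * X x + (\<mu> \<bullet> u) * indicator (A n) x \<partial>Q)"
        by (intro Bochner_Integration.integral_cong refl) (simp add: smu algebra_simps)
      also have "\<dots> = (\<integral>x. indicator (A n) x * X x \<partial>Q) + (\<mu> \<bullet> u) * p"
        using iAX iA An unfolding p_def by simp
      finally show ?thesis unfolding cond_exp_event_def p_def by (simp add: mult.commute)
    qed
    have vu: "- (((\<integral>ys. sample_mean T n ys \<partial>Q) - cond_exp_event Q (A n) (sample_mean T n)) \<bullet> u)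
        = (\<integral>x. indicator (A n) x * X x \<partial>Q) / p"
      using E1 E2 p by (simp add: inner_diff_left field_simps)
    define l where "l = sqrt (real n) / L"
    have l0: "l > 0" unfolding l_def using n0 L1 by simp
    have sq: "sqrt (real n) \<ge> 2 / c"
    proof -
      have "sqrt (real n) \<ge> sqrt (4 / c^2)" using nc by simp
      also have "sqrt (4 / c^2) = 2 / c" using c by (simp add: real_sqrt_divide)
      finally show ?thesis .
    qed
    have ld: "\<bar>l / real n\<bar> \<le> c / 2"
    proof -
      have "\<bar>l / real n\<bar> = 1 / (L * sqrt (real n))" unfolding l_def using n0 L1
        by (simp add: field_simps)
      also have "\<dots> \<le> 1 / sqrt (real n)" using L1 n0
        by (intro divide_left_mono) (auto simp: mult_le_cancel_right1)
      also have "\<dots> \<le> 1 / (2 / c)" using sq c n0 by (intro divide_left_mono) auto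
      finally show ?thesis by simp
    qed
    have pm: "integrable Q (\<lambda>\<omega>. exp (l * X \<omega>)) \<and> (\<integral>\<omega>. exp (l * X \<omega>) \<partial>Q) \<le> exp (K * l^2 / real n)"
      using product_mgf[OF P0 Ym mgf n0 ld] unfolding Qd X_def by blast
    have "K * l^2 / real n = K / L^2" unfolding l_def using n0 L1 by (simp add: power_divide)
    also have "\<dots> \<le> 1" using KL L1 by simp
    finally have "exp (K * l^2 / real n) \<le> exp 1" by simp
    with pm have Eexp: "(\<integral>\<omega>. exp (l * X \<omega>) \<partial>Q) \<le> 3" using exp_le by linarith
    have fen: "(\<integral>x. indicator (A n) x * X x \<partial>Q) / p \<le> ((\<integral>x. exp (l * X x) \<partial>Q) + ln (1 / p) - 1) / l"
      using fenchel_integral[OF Q An _ iX _ l0] p pm unfolding p_def by blast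
    have lnp: "ln (1 / p) \<le> ln (real n)" using p by (intro ln_mono) auto
    have lnn: "ln (real n) \<ge> 0" using n0 by simp
    have "((\<integral>x. exp (l * X x) \<partial>Q) + ln (1 / p) - 1) / l \<le> (2 + 2 * ln (real n)) / l"
      using Eexp lnp lnn l0 by (intro divide_right_mono) auto
    also have "\<dots> = 2 * L * ((1 + ln (real n)) / sqrt (real n))" unfolding l_def by (simp add: field_simps)
    finally show "- (((\<integral>ys. sample_mean T n ys \<partial>iid_sample n (ef_measure mu T \<theta>0))
      - cond_exp_event (iid_sample n (ef_measure mu T \<theta>0)) (A n) (sample_mean T n)) \<bullet> u)
      \<le> 2 * L * ((1 + ln (real n)) / sqrt (real n))"
      using vu fen unfolding Q_def P0_def by linarith
  qed
qed

lemma rate_limit: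
  fixes \<delta> :: real assumes "\<delta> < 1/2"
  shows "(\<lambda>n. real n powr \<delta> * ((1 + ln (real n)) / sqrt (real n))) \<longlonglongrightarrow> 0"
proof -
  define e where "e = 1/2 - \<delta>"
  have e: "e > 0" using assms unfolding e_def by simp
  have l1: "(\<lambda>n. real n powr (-e)) \<longlonglongrightarrow> 0"
    using e by (intro tendsto_neg_powr filterlim_real_sequentially) auto
  have l2: "(\<lambda>n. ln (real n) / real n powr e) \<longlonglongrightarrow> 0" using lim_ln_over_power[OF e] .
  have l: "(\<lambda>n. real n powr (-e) + ln (real n) / real n powr e) \<longlonglongrightarrow> 0"
    using tendsto_add[OF l1 l2] by simp
  show ?thesis
  proof (rule Lim_transform_eventually[OF l])
    show "\<forall>\<^sub>F n in sequentially. real n powr (-e) + ln (real n) / real n powr e =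
        real n powr \<delta> * ((1 + ln (real n)) / sqrt (real n))"
    proof (rule eventually_mono[OF eventually_gt_at_top[of 0]])
      fix n :: nat assume n: "n > 0"
      have s: "sqrt (real n) = real n powr (1/2)" using n by (simp add: powr_half_sqrt)
      have "real n powr \<delta> / real n powr (1/2) = real n powr (-e)"
        unfolding e_def using n by (simp add: powr_diff[symmetric])
      moreover have "real n powr (-e) = 1 / real n powr e" using n by (simp add: powr_minus_divide)
      ultimately have q: "real n powr \<delta> / real n powr (1/2) = 1 / real n powr e" by simp
      have "real n powr \<delta> * ((1 + ln (real n)) / sqrt (real n)) = (1 + ln (real n)) * (real n powr \<delta> / real n powr (1/2))"
        unfolding s by simp
      also have "\<dots> = (1 + ln (real n)) / real n powr e" unfolding q by simp
      also have "\<dots> = 1 / real n powr e + ln (real n) / real n powr e" by (simp add: add_divide_distrib)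
      finally show "real n powr (-e) + ln (real n) / real n powr e =
        real n powr \<delta> * ((1 + ln (real n)) / sqrt (real n))"
        using \<open>real n powr (-e) = 1 / real n powr e\<close> by simp
    qed
  qed
qed

theorem lemma6:
  fixes mu :: "'y measure" and T :: "'y \<Rightarrow> 'p::euclidean_space"
    and Fstar :: "'y measure"
    and Theta :: "'m::countable \<Rightarrow> 'p set"
    and S :: "nat \<Rightarrow> 'p \<Rightarrow> 'm"
    and M :: "'m" and \<theta>0 :: "'p"
  assumes reg: "regular_exp_family mu T"
    and fstar: "prob_space Fstar" "sets Fstar = sets mu"
    and sub: "\<And>m. Theta m \<subseteq> nat_param_space mu T"
    and S_meas: "\<And>n. S n \<in> borel \<rightarrow>\<^sub>M count_space UNIV"
    and target: "\<theta>0 \<in> Theta M"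
      "\<And>\<theta>. \<theta> \<in> Theta M \<Longrightarrow> integrable Fstar (ef_loglik mu T \<theta>)"
      "\<And>\<theta>. \<theta> \<in> Theta M \<Longrightarrow>
          (\<integral>y. ef_loglik mu T \<theta> y \<partial>Fstar) \<le> (\<integral>y. ef_loglik mu T \<theta>0 y \<partial>Fstar)"
    and cond_i: "eventually (\<lambda>n. sel_prob T S n Fstar M > 0) sequentially"
      "(\<lambda>n. 1 / sel_prob T S n Fstar M) \<in> o(\<lambda>n. real n)"
    and cond_ii: "filterlim (\<lambda>n. (INF \<theta>\<in>Theta M. sel_prob T S n (ef_measure mu T \<theta>) M)
                              * exp (real n)) at_top sequentially"
    and cond_iii: "\<exists>r>0. \<exists>g. g \<in> o(\<lambda>n. real n) \<and>
        eventually (\<lambda>n. \<forall>\<theta>\<in>ball \<theta>0 r \<inter> Theta M.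
            sel_prob T S n (ef_measure mu T \<theta>) M > 0 \<and>
            1 / sel_prob T S n (ef_measure mu T \<theta>) M \<le> g n) sequentially"
  shows "\<forall>\<delta>::real. \<delta> < 1/2 \<longrightarrow>
    ((\<lambda>n. real n powr \<delta> *
        norm ((\<integral>ys. sample_mean T n ys \<partial>iid_sample n (ef_measure mu T \<theta>0))
              - cond_exp_event (iid_sample n (ef_measure mu T \<theta>0))
                  (sel_event T S n (ef_measure mu T \<theta>0) M) (sample_mean T n)))
     \<longlonglongrightarrow> 0)"
proof (intro allI impI)
  fix \<delta> :: real assume \<delta>: "\<delta> < 1/2"
  define NP where "NP = nat_param_space mu T"
  have th: "\<theta>0 \<in> NP" using sub target(1) unfolding NP_def by blast
  have Tm0[measurable]: "T \<in> borel_measurable mu" and opn: "open NP"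
    using reg unfolding regular_exp_family_def NP_def by auto
  obtain e where e: "e > 0" "ball \<theta>0 e \<subseteq> NP" using opn th open_contains_ball by blast
  define P0 where "P0 = ef_measure mu T \<theta>0"
  have P0: "prob_space P0" unfolding P0_def using ef_prob[OF reg] th unfolding NP_def by blast
  interpret P0: prob_space P0 by (rule P0)
  have sP0: "sets P0 = sets mu" unfolding P0_def ef_measure_def by simp
  have Tm[measurable]: "T \<in> borel_measurable P0"
    using Tm0 by (subst measurable_cong_sets[OF sP0 refl])
  have expmom: "\<exists>c>0. integrable P0 (\<lambda>y. exp (c * \<bar>T y \<bullet> u\<bar>))" for u
  proof -
    define c where "c = e / (2 * (norm u + 1))"
    have c: "c > 0" proof -
      have "0 < 2 * (norm u + 1)" by (smt (verit) norm_ge_zero)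
      thus ?thesis using e unfolding c_def by simp
    qed
    have inb: "\<theta>0 + t *\<^sub>R u \<in> NP" if "\<bar>t\<bar> = c" for t
    proof -
      have "norm (t *\<^sub>R u) = c * norm u" using that c by simp
      also have "\<dots> < e"
      proof -
        have n0: "norm u \<ge> 0" by simp
        have "c * norm u = e * (norm u / (2 * (norm u + 1)))" unfolding c_def by simp
        also have "norm u / (2 * (norm u + 1)) < 1"
        proof -
          have "norm u < 2 * (norm u + 1)" using n0 by (smt (verit))
          moreover have "0 < 2 * (norm u + 1)" using n0 by (smt (verit))
          ultimately show ?thesis by (simp only: divide_less_eq_1) blast
        qed
        hence "e * (norm u / (2 * (norm u + 1))) < e * 1" using e by (intro mult_strict_left_mono) auto
        finally show ?thesis by simp
      qed
      finally have "\<theta>0 + t *\<^sub>R u \<in> ball \<theta>0 e" by (simp add: dist_norm)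
      thus ?thesis using e by blast
    qed
    have ie: "integrable P0 (\<lambda>y. exp (t * (T y \<bullet> u)))" if "\<bar>t\<bar> = c" for t
      using ef_exp_integrable[OF reg th[unfolded NP_def] inb[OF that, unfolded NP_def]]
      unfolding P0_def by (simp add: inner_commute)
    have "integrable P0 (\<lambda>y. exp (c * \<bar>T y \<bullet> u\<bar>))"
    proof (rule Bochner_Integration.integrable_bound[OF Bochner_Integration.integrable_add[OF ie ie]])
      show "\<bar>c\<bar> = c" using c by simp
      show "\<bar>-c\<bar> = c" using c by simp
      show "(\<lambda>y. exp (c * \<bar>T y \<bullet> u\<bar>)) \<in> borel_measurable P0" by measurable
      show "AE x in P0. norm (exp (c * \<bar>T x \<bullet> u\<bar>)) \<le> norm (exp (c * (T x \<bullet> u)) + exp (- c * (T x \<bullet> u)))"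
      proof (intro AE_I2)
        fix x
        have "exp (c * \<bar>T x \<bullet> u\<bar>) \<le> exp (c * (T x \<bullet> u)) + exp (- c * (T x \<bullet> u))"
        proof (cases "T x \<bullet> u \<ge> 0")
          case True
          hence "exp (c * \<bar>T x \<bullet> u\<bar>) = exp (c * (T x \<bullet> u))" by simp
          moreover have "exp (- c * (T x \<bullet> u)) > 0" by simp
          ultimately show ?thesis by linarith
        next
          case False
          hence "exp (c * \<bar>T x \<bullet> u\<bar>) = exp (- c * (T x \<bullet> u))" by simp
          moreover have "exp (c * (T x \<bullet> u)) > 0" by simp
          ultimately show ?thesis by linarith
        qed
        thus "norm (exp (c * \<bar>T x \<bullet> u\<bar>)) \<le> norm (exp (c * (T x \<bullet> u)) + exp (- c * (T x \<bullet> u)))"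
          by simp
      qed
    qed
    thus ?thesis using c by blast
  qed
  have intT: "integrable P0 T"
  proof -
    have ib: "integrable P0 (\<lambda>y. T y \<bullet> b)" for b
    proof -
      obtain c where "c > 0" "integrable P0 (\<lambda>y. exp (c * \<bar>T y \<bullet> b\<bar>))" using expmom by blast
      thus ?thesis using int_Y_from_exp[of "\<lambda>y. T y \<bullet> b" P0 c] by simp
    qed
    have "integrable P0 (\<lambda>y. \<Sum>b\<in>Basis. (T y \<bullet> b) *\<^sub>R b)"
      using ib by (intro Bochner_Integration.integrable_sum integrable_scaleR_left) auto
    thus ?thesis by (simp add: euclidean_representation)
  qed
  obtain r g where rg: "r > 0" "g \<in> o(\<lambda>n. real n)"
    "eventually (\<lambda>n. \<forall>\<theta>\<in>ball \<theta>0 r \<inter> Theta M.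
            sel_prob T S n (ef_measure mu T \<theta>) M > 0 \<and>
            1 / sel_prob T S n (ef_measure mu T \<theta>) M \<le> g n) sequentially"
    using cond_iii by blast
  have gn: "eventually (\<lambda>n. norm (g n) \<le> 1 * norm (real n)) sequentially"
    using landau_o.smallD[OF rg(2), of 1] by simp
  define A where "A n = sel_event T S n P0 M" for n
  have Ev: "eventually (\<lambda>n. measure (iid_sample n (ef_measure mu T \<theta>0)) (A n) > 0 \<and>
              1 / measure (iid_sample n (ef_measure mu T \<theta>0)) (A n) \<le> real n) sequentially"
  proof (rule eventually_mono[OF eventually_conj[OF rg(3) gn]])
    fix n assume h: "(\<forall>\<theta>\<in>ball \<theta>0 r \<inter> Theta M.
            sel_prob T S n (ef_measure mu T \<theta>) M > 0 \<and>
            1 / sel_prob T S n (ef_measure mu T \<theta>) M \<le> g n) \<and> norm (g n) \<le> 1 * norm (real n)"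
    have "\<theta>0 \<in> ball \<theta>0 r \<inter> Theta M" using rg(1) target(1) by simp
    with h have "sel_prob T S n P0 M > 0" "1 / sel_prob T S n P0 M \<le> g n" "g n \<le> real n"
      unfolding P0_def by auto
    thus "measure (iid_sample n (ef_measure mu T \<theta>0)) (A n) > 0 \<and>
              1 / measure (iid_sample n (ef_measure mu T \<theta>0)) (A n) \<le> real n"
      unfolding A_def sel_prob_def P0_def by linarith
  qed
  define v where "v n = (\<integral>ys. sample_mean T n ys \<partial>iid_sample n (ef_measure mu T \<theta>0))
      - cond_exp_event (iid_sample n (ef_measure mu T \<theta>0)) (A n) (sample_mean T n)" for n
  define h where "h n = (1 + ln (real n)) / sqrt (real n)" for n :: nat
  have dirb: "\<exists>C. eventually (\<lambda>n. - (v n \<bullet> u) \<le> C * h n) sequentially" for u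
  proof -
    obtain c where "c > 0" "integrable P0 (\<lambda>y. exp (c * \<bar>T y \<bullet> u\<bar>))" using expmom by blast
    from direction_bound[OF reg th[unfolded NP_def] Ev intT[unfolded P0_def] this[unfolded P0_def]]
    show ?thesis unfolding v_def h_def by blast
  qed
  have "\<forall>b\<in>Basis. \<exists>C. eventually (\<lambda>n. \<bar>v n \<bullet> b\<bar> \<le> C * h n) sequentially"
  proof
    fix b :: 'p
    obtain C1 where C1: "eventually (\<lambda>n. - (v n \<bullet> b) \<le> C1 * h n) sequentially" using dirb by blast
    obtain C2 where C2: "eventually (\<lambda>n. - (v n \<bullet> (-b)) \<le> C2 * h n) sequentially" using dirb by blast
    have hn: "eventually (\<lambda>n. h n \<ge> 0) sequentially"
      using eventually_ge_at_top[of 1] by (rule eventually_mono) (simp add: h_def)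
    show "\<exists>C. eventually (\<lambda>n. \<bar>v n \<bullet> b\<bar> \<le> C * h n) sequentially"
    proof (rule exI[of _ "max C1 C2"], rule eventually_mono[OF eventually_conj[OF C1 eventually_conj[OF C2 hn]]])
      fix n assume a: "- (v n \<bullet> b) \<le> C1 * h n \<and> - (v n \<bullet> (-b)) \<le> C2 * h n \<and> h n \<ge> 0"
      have "C1 * h n \<le> max C1 C2 * h n" "C2 * h n \<le> max C1 C2 * h n"
        using a by (auto intro: mult_right_mono)
      thus "\<bar>v n \<bullet> b\<bar> \<le> max C1 C2 * h n" using a by (simp add: abs_if inner_minus_right)
    qed
  qed
  then obtain Cf where Cf: "\<forall>b\<in>Basis. eventually (\<lambda>n. \<bar>v n \<bullet> b\<bar> \<le> Cf b * h n) sequentially"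
    by metis
  have evall: "eventually (\<lambda>n. \<forall>b\<in>Basis. \<bar>v n \<bullet> b\<bar> \<le> Cf b * h n) sequentially"
    using Cf by (simp add: eventually_ball_finite)
  define C where "C = (\<Sum>b\<in>Basis. Cf b)"
  have bound: "eventually (\<lambda>n. real n powr \<delta> * norm (v n) \<le> C * (real n powr \<delta> * h n)) sequentially"
  proof (rule eventually_mono[OF evall])
    fix n assume a: "\<forall>b\<in>Basis. \<bar>v n \<bullet> b\<bar> \<le> Cf b * h n"
    have "norm (v n) \<le> (\<Sum>b\<in>Basis. \<bar>v n \<bullet> b\<bar>)" by (rule norm_le_l1)
    also have "\<dots> \<le> (\<Sum>b\<in>Basis. Cf b * h n)" using a by (intro sum_mono) auto
    also have "\<dots> = C * h n" unfolding C_def by (simp add: sum_distrib_right)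
    finally have "real n powr \<delta> * norm (v n) \<le> real n powr \<delta> * (C * h n)"
      by (intro mult_left_mono) auto
    thus "real n powr \<delta> * norm (v n) \<le> C * (real n powr \<delta> * h n)" by (simp add: algebra_simps)
  qed
  have lim: "(\<lambda>n. C * (real n powr \<delta> * h n)) \<longlonglongrightarrow> 0"
    using tendsto_mult_right_zero[OF rate_limit[OF \<delta>], of C] unfolding h_def .
  have "(\<lambda>n. real n powr \<delta> * norm (v n)) \<longlonglongrightarrow> 0"
    by (rule tendsto_sandwich[OF _ bound tendsto_const lim]) (simp add: always_eventually)
  thus "(\<lambda>n. real n powr \<delta> *
        norm ((\<integral>ys. sample_mean T n ys \<partial>iid_sample n (ef_measure mu T \<theta>0))
              - cond_exp_event (iid_sample n (ef_measure mu T \<theta>0))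
                  (sel_event T S n (ef_measure mu T \<theta>0) M) (sample_mean T n)))
     \<longlonglongrightarrow> 0"
    unfolding v_def A_def P0_def .
qed

end
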